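(* Let $\Gamma$ and $\mathcal{C}$ be regular conics in the real plane which have a common point of intersection of order higher than $2$ (intersection multiplicity $3$ or $4$). Then there are no closed polygonal lines inscribed in $\Gamma$ and circumscribed about $\mathcal{C}$.
   Context: A regular conic is a smooth curve given by a quadratic equation. A polygonal line $A_1A_2\dots$ is inscribed in $\Gamma$ and circumscribed about $\mathcal{C}$ if all vertices lie on $\Gamma$ and each side line $A_iA_{i+1}$ is tangent to $\mathcal{C}$, consecutive sides through $A_i$ being the two distinct tangent lines from $A_i$ to $\mathcal{C}$; it is closed if its vertex sequence is periodic. *)

theory Defs
  imports "HOL-Analysis.Analysis" "HOL-Library.Landau_Symbols"
begin

type_synonym conic = "real \<times> real \<times> real \<times> real \<times> real \<times> real"
type_synonym point = "real \<times> real"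

fun conic_eval :: "conic \<Rightarrow> point \<Rightarrow> real" where
  "conic_eval (a, b, c, d, e, f) (x, y) =
     a * x^2 + b * x * y + c * y^2 + d * x + e * y + f"

fun conic_grad :: "conic \<Rightarrow> point \<Rightarrow> point" where
  "conic_grad (a, b, c, d, e, f) (x, y) =
     (2 * a * x + b * y + d, b * x + 2 * c * y + e)"

definition conic_points :: "conic \<Rightarrow> point set" where
  "conic_points Q = {p. conic_eval Q p = 0}"

text \<open>Determinant of the symmetric 3x3 matrix of the conic
  [[a, b/2, d/2], [b/2, c, e/2], [d/2, e/2, f]].\<close>
fun conic_det :: "conic \<Rightarrow> real" where
  "conic_det (a, b, c, d, e, f) =
     a * (c * f - e^2 / 4) - (b / 2) * (b * f / 2 - e * d / 4)
     + (d / 2) * (b * e / 4 - c * d / 2)"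

text \<open>Regular conic: nondegenerate quadratic equation whose real zero set is a
  (nonempty, hence smooth) curve: ellipse, parabola or hyperbola.\<close>
definition regular_conic :: "conic \<Rightarrow> bool" where
  "regular_conic Q \<longleftrightarrow> conic_det Q \<noteq> 0 \<and> conic_points Q \<noteq> {}"

definition line_through :: "point \<Rightarrow> point \<Rightarrow> point set" where
  "line_through A B = {A + t *\<^sub>R (B - A) | t. True}"

definition tangent_to :: "point set \<Rightarrow> conic \<Rightarrow> bool" where
  "tangent_to L C \<longleftrightarrow>
     (\<exists>X \<in> conic_points C. \<exists>v. v \<noteq> 0 \<and> conic_grad C X \<bullet> v = 0
        \<and> L = {X + t *\<^sub>R v | t. True})"

definition inscribed_circumscribed :: "conic \<Rightarrow> conic \<Rightarrow> (nat \<Rightarrow> point) \<Rightarrow> bool" where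
  "inscribed_circumscribed \<Gamma> C A \<longleftrightarrow>
     (\<forall>i. A i \<in> conic_points \<Gamma>) \<and>
     (\<forall>i. A i \<noteq> A (Suc i)) \<and>
     (\<forall>i. tangent_to (line_through (A i) (A (Suc i))) C) \<and>
     (\<forall>i. line_through (A i) (A (Suc i)) \<noteq> line_through (A (Suc i)) (A (Suc (Suc i))))"

definition closed_polygonal :: "(nat \<Rightarrow> point) \<Rightarrow> bool" where
  "closed_polygonal A \<longleftrightarrow> (\<exists>n > 0. \<forall>i. A (i + n) = A i)"

text \<open>Intersection multiplicity of C with the smooth conic \<Gamma> at P is at least 3:
  along a regular local parametrisation \<gamma> of \<Gamma> at P, the defining polynomial
  of C vanishes to order at least 3.\<close>
definition intersection_order_ge3 :: "conic \<Rightarrow> conic \<Rightarrow> point \<Rightarrow> bool" where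
  "intersection_order_ge3 \<Gamma> C P \<longleftrightarrow>
     (\<exists>\<gamma> :: real \<Rightarrow> point. \<exists>v. \<gamma> 0 = P \<and> v \<noteq> 0 \<and>
        (\<gamma> has_vector_derivative v) (at 0) \<and>
        eventually (\<lambda>t. \<gamma> t \<in> conic_points \<Gamma>) (at 0) \<and>
        (\<lambda>t. conic_eval C (\<gamma> t)) \<in> O[at 0](\<lambda>t. t ^ 3))"

end

theory Submission
  imports Defs
begin


fun qf :: "conic \<Rightarrow> point \<Rightarrow> real" where
  "qf (a, b, c, d, e, f) (w1, w2) = a * w1^2 + b * w1 * w2 + c * w2^2"
fun bil :: "conic \<Rightarrow> point \<Rightarrow> point \<Rightarrow> real" where
  "bil (a, b, c, d, e, f) (p1, p2) (q1, q2) = 2*a*p1*q1 + b*(p1*q2+p2*q1) + 2*c*p2*q2"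

lemma det_law:
  fixes Q :: conic and P e1 e2 :: point
  shows "conic_det (qf Q e1, bil Q e1 e2, qf Q e2, conic_grad Q P \<bullet> e1, conic_grad Q P \<bullet> e2, conic_eval Q P)
     = (fst e1 * snd e2 - snd e1 * fst e2)^2 * conic_det Q"
  apply (cases Q; cases P; cases e1; cases e2)
  apply (simp add: power2_eq_square field_simps)
  done

lemma det_grad:
  assumes "conic_det Q \<noteq> 0" "conic_eval Q X = 0"
  shows "conic_grad Q X \<noteq> 0"
proof
  assume g: "conic_grad Q X = 0"
  obtain a b c d e f where Q: "Q = (a,b,c,d,e,f)" by (cases Q) auto
  obtain x y where X: "X = (x,y)" by (cases X) auto
  have d: "d = -2*a*x - b*y" and e: "e = -b*x-2*c*y" using g by (auto simp: Q X zero_prod_def)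
  have f: "f = -(d*x+e*y)/2" using assms(2) unfolding Q X d e by (simp add: power2_eq_square algebra_simps)
  have "conic_det Q = 0" unfolding Q f unfolding d e by (simp add: power2_eq_square field_simps)
  with assms show False by simp
qed



lemma bigO3_lim:
  fixes f :: "real \<Rightarrow> real"
  assumes "f \<in> O[at 0](\<lambda>t. t ^ 3)"
  shows "((\<lambda>t. f t / t) \<longlongrightarrow> 0) (at 0)" "((\<lambda>t. f t / t^2) \<longlongrightarrow> 0) (at 0)"
proof -
  obtain c where c: "c > 0" "eventually (\<lambda>t. norm (f t) \<le> c * norm (t^3)) (at (0::real))"
    using assms by (elim landau_o.bigE)
  have ev: "eventually (\<lambda>t. t \<noteq> 0) (at (0::real))" by (simp add: eventually_at_filter)
  have "eventually (\<lambda>t. norm (f t / t) \<le> c * t^2) (at (0::real))"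
    using c(2) ev
  proof eventually_elim
    case (elim t)
    then have "\<bar>f t\<bar> \<le> c * \<bar>t\<bar>^2 * \<bar>t\<bar>" by (simp add: abs_mult power_abs power3_eq_cube power2_eq_square mult.assoc)
    then have "\<bar>f t\<bar> / \<bar>t\<bar> \<le> c * \<bar>t\<bar>^2" using elim(2) by (simp add: divide_le_eq)
    then show ?case by (simp add: abs_divide power2_abs)
  qed
  moreover have "((\<lambda>t. c * t^2) \<longlongrightarrow> 0) (at (0::real))"
    by (auto intro!: tendsto_eq_intros)
  ultimately show "((\<lambda>t. f t / t) \<longlongrightarrow> 0) (at 0)" by (rule Lim_null_comparison)
  have "eventually (\<lambda>t. norm (f t / t^2) \<le> c * \<bar>t\<bar>) (at (0::real))"
    using c(2) ev
  proof eventually_elim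
    case (elim t)
    then have "\<bar>f t\<bar> \<le> c * \<bar>t\<bar> * \<bar>t\<bar>^2" by (simp add: abs_mult power_abs power3_eq_cube power2_eq_square mult.assoc)
    then have "\<bar>f t\<bar> / \<bar>t\<bar>^2 \<le> c * \<bar>t\<bar>" using elim(2) by (simp add: divide_le_eq)
    then show ?case by (simp add: abs_divide power2_abs)
  qed
  moreover have "((\<lambda>t. c * \<bar>t\<bar>) \<longlongrightarrow> 0) (at (0::real))"
    by (auto intro!: tendsto_eq_intros)
  ultimately show "((\<lambda>t. f t / t^2) \<longlongrightarrow> 0) (at 0)" by (rule Lim_null_comparison)
qed

lemma asym:
  fixes X Y :: "real \<Rightarrow> real"
  assumes X0: "X 0 = 0" and Y0: "Y 0 = 0"
    and dX: "(X has_real_derivative V1) (at 0)" and dY: "(Y has_real_derivative V2) (at 0)"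
    and V: "V1 \<noteq> 0 \<or> V2 \<noteq> 0"
    and ev: "eventually (\<lambda>t. Y t + a*(X t)^2 + b*X t*Y t + c*(Y t)^2 = 0) (at 0)"
    and O: "(\<lambda>t. E*X t + F*Y t + A0*(X t)^2 + B0*X t*Y t + D0*(Y t)^2) \<in> O[at 0](\<lambda>t. t^3)"
  shows "E = 0 \<and> A0 = a*F"
proof -
  let ?F = "at (0::real)"
  have nt: "?F \<noteq> bot" by simp
  have evt: "eventually (\<lambda>t. t \<noteq> 0) ?F" by (simp add: eventually_at_filter)
  define qx where "qx t = X t / t" for t
  define qy where "qy t = Y t / t" for t
  have hX: "(qx \<longlongrightarrow> V1) ?F" using dX X0 by (simp add: has_field_derivative_iff qx_def[abs_def])
  have hY: "(qy \<longlongrightarrow> V2) ?F" using dY Y0 by (simp add: has_field_derivative_iff qy_def[abs_def])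
  have cX: "(X \<longlongrightarrow> 0) ?F" using DERIV_isCont[OF dX] X0 by (simp add: isCont_def)
  have cY: "(Y \<longlongrightarrow> 0) ?F" using DERIV_isCont[OF dY] Y0 by (simp add: isCont_def)
  define W where "W t = 1 + b * X t + c * Y t" for t
  have hW: "(W \<longlongrightarrow> 1) ?F" unfolding W_def using cX cY by (auto intro!: tendsto_eq_intros)
  have evW: "eventually (\<lambda>t. W t > 0) ?F" using order_tendstoD(1)[OF hW] by simp
  have e1: "eventually (\<lambda>t. qy t * W t = - a * X t * qx t) ?F"
    using ev evt
  proof eventually_elim
    case (elim t)
    then have "Y t * W t = - a * (X t)^2" unfolding W_def by (simp add: algebra_simps power2_eq_square)
    then show ?case using elim(2) by (simp add: field_simps power2_eq_square qx_def qy_def)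
  qed
  have l1: "((\<lambda>t. qy t * W t) \<longlongrightarrow> V2 * 1) ?F" using hY hW by (rule tendsto_mult)
  have l2: "((\<lambda>t. - a * X t * qx t) \<longlongrightarrow> - a * 0 * V1) ?F"
    using tendsto_mult[OF tendsto_mult[OF tendsto_const[of "-a"] cX] hX] by simp
  have "((\<lambda>t. qy t * W t) \<longlongrightarrow> - a * 0 * V1) ?F"
    using Lim_transform_eventually[OF l2] e1 by (simp add: eventually_mono)
  with l1 have V20: "V2 = 0" using tendsto_unique[OF nt] by fastforce
  with V have V1: "V1 \<noteq> 0" by simp
  have e2: "eventually (\<lambda>t. Y t / t^2 = (- a * qx t^2) / W t) ?F"
    using ev evt evW
  proof eventually_elim
    case (elim t)
    then have "Y t * W t = - a * (X t)^2" unfolding W_def by (simp add: algebra_simps power2_eq_square)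
    then show ?case using elim(2,3) by (simp add: field_simps power2_eq_square qx_def qy_def)
  qed
  have l3: "((\<lambda>t. (- a * qx t^2) / W t) \<longlongrightarrow> (- a * V1^2) / 1) ?F"
    using hX hW by (auto intro!: tendsto_eq_intros)
  define ry where "ry t = Y t / t^2" for t
  have hY2: "(ry \<longlongrightarrow> - a * V1^2) ?F"
    using Lim_transform_eventually[OF l3] e2 by (simp add: eventually_mono eq_commute ry_def)
  define f where "f t = E*X t + F*Y t + A0*(X t)^2 + B0*X t*Y t + D0*(Y t)^2" for t
  have fl: "((\<lambda>t. f t / t) \<longlongrightarrow> 0) ?F" "((\<lambda>t. f t / t^2) \<longlongrightarrow> 0) ?F"
    using bigO3_lim[of f] O unfolding f_def by auto
  have e3: "eventually (\<lambda>t. f t / t = E * qx t + F * qy t + A0 * X t * qx t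
      + B0 * X t * qy t + D0 * Y t * qy t) ?F"
    using evt by eventually_elim (simp add: f_def field_simps power2_eq_square qx_def qy_def)
  have l4: "((\<lambda>t. E * qx t + F * qy t + A0 * X t * qx t
      + B0 * X t * qy t + D0 * Y t * qy t) \<longlongrightarrow> E * V1 + F * V2 + A0 * 0 * V1 + B0 * 0 * V2 + D0 * 0 * V2) ?F"
    using hX hY cX cY by (auto intro!: tendsto_eq_intros)
  have "((\<lambda>t. f t / t) \<longlongrightarrow> E * V1 + F * V2 + A0 * 0 * V1 + B0 * 0 * V2 + D0 * 0 * V2) ?F"
    using Lim_transform_eventually[OF l4] e3 by (simp add: eventually_mono eq_commute)
  with fl(1) have "E * V1 = 0" using tendsto_unique[OF nt] V20 by fastforce
  with V1 have E0: "E = 0" by simp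
  have e4: "eventually (\<lambda>t. f t / t^2 = F * ry t + A0 * qx t^2
      + B0 * qx t * qy t + D0 * qy t^2) ?F"
    using evt by eventually_elim (simp add: f_def E0 ry_def field_simps power2_eq_square qx_def qy_def)
  have l5: "((\<lambda>t. F * ry t + A0 * qx t^2
      + B0 * qx t * qy t + D0 * qy t^2) \<longlongrightarrow> F * (- a * V1^2) + A0 * V1^2 + B0 * V1 * V2 + D0 * V2^2) ?F"
    using hX hY hY2 by (auto intro!: tendsto_eq_intros)
  have "((\<lambda>t. f t / t^2) \<longlongrightarrow> F * (- a * V1^2) + A0 * V1^2 + B0 * V1 * V2 + D0 * V2^2) ?F"
    using Lim_transform_eventually[OF l5] e4 by (simp add: eventually_mono eq_commute)
  with fl(2) have "F * (- a * V1^2) + A0 * V1^2 + B0 * V1 * V2 + D0 * V2^2 = 0" using tendsto_unique[OF nt] by fastforce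
  then have "(A0 - a * F) * V1^2 = 0" using V20 by (simp add: algebra_simps)
  with V1 have "A0 = a * F" by simp
  with E0 show ?thesis by simp
qed



lemma core:
  fixes a b c b' c' x0 y0 x1 y1 :: real
  assumes y1: "y1 \<noteq> 0" and y0: "y0 \<noteq> 0"
    and G: "y1 + a*x1^2 + b*x1*y1 + c*y1^2 = 0"
    and C: "y0 + a*x0^2 + b'*x0*y0 + c'*y0^2 = 0"
  shows "(2*a*x0 + b'*y0)*(x1 - x0) + (1 + b'*x0 + 2*c'*y0)*(y1 - y0)
     = y0*y1*((b'-b)*(x1/y1) + (c'-c) - a*(x1/y1 - x0/y0)^2)"
proof -
  have h1: "a*x1^2 = -y1 - b*x1*y1 - c*y1^2" using G by simp
  have h0: "a*x0^2 = -y0 - b'*x0*y0 - c'*y0^2" using C by simp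
  have "y0*y1*((b'-b)*(x1/y1) + (c'-c) - a*(x1/y1 - x0/y0)^2)
      = (b'-b)*x1*y0 + (c'-c)*y0*y1 - (a*x1^2)*y0/y1 + 2*a*x1*x0 - (a*x0^2)*y1/y0"
    using y0 y1 by (simp add: field_simps power2_eq_square)
  also have "\<dots> = (b'-b)*x1*y0 + (c'-c)*y0*y1 + (y0 + b*x1*y0 + c*y0*y1) + 2*a*x1*x0 + (y1 + b'*x0*y1 + c'*y0*y1)"
    unfolding h1 h0 using y0 y1 by (simp add: field_simps power2_eq_square)
  also have "\<dots> = (2*a*x0 + b'*y0)*(x1 - x0) + (1 + b'*x0 + 2*c'*y0)*(y1 - y0)"
    using h0 by (simp add: algebra_simps power2_eq_square)
  finally show ?thesis by simp
qed



lemma recur: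
  fixes k u :: "nat \<Rightarrow> real" and a \<beta> \<gamma> :: real and m :: nat
  assumes a: "a \<noteq> 0"
    and h1: "\<And>i. a * (k i - u i)^2 = \<beta> * k i + \<gamma>"
    and h2: "\<And>i. a * (k (Suc i) - u i)^2 = \<beta> * k (Suc i) + \<gamma>"
    and kne: "\<And>i. k i \<noteq> k (Suc i)"
    and une: "\<And>i. u i \<noteq> u (Suc i)"
    and m: "m > 0" and per: "\<And>i. k (i + m) = k i"
  shows False
proof -
  have r1: "a * (k i + k (Suc i) - 2 * u i) = \<beta>" for i
  proof -
    have "(k i - k (Suc i)) * (a * (k i + k (Suc i) - 2 * u i)) = (k i - k (Suc i)) * \<beta>"
      using h1[of i] h2[of i] by (simp add: algebra_simps power2_eq_square)
    then show ?thesis using kne[of i] by simp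
  qed
  have r2: "u (Suc i) = 2 * k (Suc i) - u i" for i
  proof -
    have "a * ((u (Suc i) - u i) * (u (Suc i) + u i - 2 * k (Suc i))) = 0"
      using h1[of "Suc i"] h2[of i] by (simp add: algebra_simps power2_eq_square)
    then show ?thesis using a une[of i] by simp
  qed
  have uf: "u i = (k i + k (Suc i)) / 2 - \<beta> / (2 * a)" for i
    using r1[of i] a by (simp add: field_simps)
  have s: "u i - k i = u 0 - k 0 + real i * (\<beta> / a)" for i
  proof (induction i)
    case 0 then show ?case by simp
  next
    case (Suc i)
    have "a * (u (Suc i) - k (Suc i)) = a * (u i - k i) + \<beta>"
      using r1[of i] unfolding r2[of i] by (simp add: algebra_simps)
    then have "u (Suc i) - k (Suc i) = u i - k i + \<beta> / a"
      using a by (simp add: field_simps)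
    then show ?case using Suc by (simp add: algebra_simps)
  qed
  have "u m = u 0" using uf[of m] uf[of 0] per[of 0] per[of 1] by simp
  then have "real m * (\<beta> / a) = 0" using s[of m] per[of 0] by simp
  then have b0: "\<beta> = 0" using m a by simp
  have kk: "k i = k 0 + real i * (2 * (u 0 - k 0))" for i
  proof (induction i)
    case 0 then show ?case by simp
  next
    case (Suc i)
    have "a * (k i + k (Suc i) - 2 * u i) = 0" using r1[of i] b0 by simp
    then have "k (Suc i) = k i + 2 * (u i - k i)"
      using a by simp
    then show ?case using Suc s[of i] b0 by (simp add: algebra_simps)
  qed
  have "real m * (2 * (u 0 - k 0)) = 0" using kk[of m] per[of 0] by simp
  then have "u 0 = k 0" using m by simp
  then have "k 1 = k 0" using kk[of 1] by simp
  then show False using kne[of 0] by simp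
qed



lemma eval_phi:
  "conic_eval Q (P + x *\<^sub>R e1 + y *\<^sub>R e2) = conic_eval Q P + (conic_grad Q P \<bullet> e1) * x
     + (conic_grad Q P \<bullet> e2) * y + qf Q e1 * x^2 + bil Q e1 e2 * x * y + qf Q e2 * y^2"
  by (cases Q; cases P; cases e1; cases e2) (simp add: power2_eq_square algebra_simps)

lemma grad_phi:
  "conic_grad Q (P + s *\<^sub>R e1 + t *\<^sub>R e2) \<bullet> ((P + x *\<^sub>R e1 + y *\<^sub>R e2) - (P + s *\<^sub>R e1 + t *\<^sub>R e2))
   = (conic_grad Q P \<bullet> e1 + 2 * qf Q e1 * s + bil Q e1 e2 * t) * (x - s)
     + (conic_grad Q P \<bullet> e2 + bil Q e1 e2 * s + 2 * qf Q e2 * t) * (y - t)"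
  by (cases Q; cases P; cases e1; cases e2) (simp add: power2_eq_square algebra_simps)

lemma det_special: "conic_det (a, b, c, 0, f, 0) = - a * f^2 / 4"
  by (simp add: power2_eq_square)

lemma param_inj:
  fixes a b c x y x' y' :: real
  assumes "y \<noteq> 0" "y' \<noteq> 0" "y + a*x^2 + b*x*y + c*y^2 = 0" "y' + a*x'^2 + b*x'*y' + c*y'^2 = 0"
    "x / y = x' / y'"
  shows "x = x' \<and> y = y'"
proof -
  define k where "k = x / y"
  have x: "x = k * y" using assms(1) by (simp add: k_def)
  have x': "x' = k * y'" using assms(2,5) by (simp add: k_def)
  have "y * (1 + (a*k^2 + b*k + c) * y) = 0" using assms(3) unfolding x by (simp add: algebra_simps power2_eq_square)
  then have 1: "1 + (a*k^2 + b*k + c) * y = 0" using assms(1) by simp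
  have "y' * (1 + (a*k^2 + b*k + c) * y') = 0" using assms(4) unfolding x' by (simp add: algebra_simps power2_eq_square)
  then have 2: "1 + (a*k^2 + b*k + c) * y' = 0" using assms(2) by simp
  have "(a*k^2 + b*k + c) * (y - y') = 0" using 1 2 by (simp add: algebra_simps)
  moreover have "a*k^2 + b*k + c \<noteq> 0" using 1 by auto
  ultimately have "y = y'" by simp
  then show ?thesis using x x' by simp
qed

lemma line_eq:
  fixes g v w X :: point
  assumes "g \<noteq> 0" "g \<bullet> v = 0" "g \<bullet> w = 0" "v \<noteq> 0" "w \<noteq> 0"
  shows "{X + t *\<^sub>R v | t. True} = {X + t *\<^sub>R w | t. True}"
proof -
  obtain g1 g2 where g: "g = (g1, g2)" by (cases g)
  obtain v1 v2 where v: "v = (v1, v2)" by (cases v)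
  obtain w1 w2 where w: "w = (w1, w2)" by (cases w)
  have "\<exists>l. l \<noteq> 0 \<and> w = l *\<^sub>R v"
  proof (cases "g1 = 0")
    case True
    then have "g2 \<noteq> 0" using assms(1) g by (auto simp: zero_prod_def)
    then have "v2 = 0" "w2 = 0" using assms(2,3) True g v w by auto
    then have "v1 \<noteq> 0" "w1 \<noteq> 0" using assms(4,5) v w by (auto simp: zero_prod_def)
    then show ?thesis using \<open>v2 = 0\<close> \<open>w2 = 0\<close> v w by (intro exI[of _ "w1/v1"]) auto
  next
    case False
    have v1: "v1 = - g2 * v2 / g1" and w1: "w1 = - g2 * w2 / g1"
      using assms(2,3) False g v w by (auto simp: field_simps)
    then have "v2 \<noteq> 0" "w2 \<noteq> 0" using assms(4,5) v w by (auto simp: zero_prod_def)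
    then show ?thesis using v1 w1 v w by (intro exI[of _ "w2/v2"]) (auto simp: field_simps)
  qed
  then obtain l where l: "l \<noteq> 0" "w = l *\<^sub>R v" by blast
  show ?thesis
  proof (intro set_eqI iffI)
    fix z assume "z \<in> {X + t *\<^sub>R v | t. True}"
    then obtain t where "z = X + t *\<^sub>R v" by blast
    then have "z = X + (t / l) *\<^sub>R w" using l by simp
    then show "z \<in> {X + t *\<^sub>R w | t. True}" by blast
  next
    fix z assume "z \<in> {X + t *\<^sub>R w | t. True}"
    then obtain t where "z = X + t *\<^sub>R w" by blast
    then have "z = X + (t * l) *\<^sub>R v" using l by simp
    then show "z \<in> {X + t *\<^sub>R v | t. True}" by blast
  qed
qed



theorem proposition2p13:
  fixes \<Gamma> C :: conic and P :: point
  assumes "regular_conic \<Gamma>" and "regular_conic C"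
    and "conic_points \<Gamma> \<noteq> conic_points C"
    and "P \<in> conic_points \<Gamma>" and "P \<in> conic_points C"
    and "intersection_order_ge3 \<Gamma> C P"
  shows "\<not> (\<exists>A. inscribed_circumscribed \<Gamma> C A \<and> closed_polygonal A)"
proof
  assume "\<exists>A. inscribed_circumscribed \<Gamma> C A \<and> closed_polygonal A"
  then obtain A where insc: "inscribed_circumscribed \<Gamma> C A" and clo: "closed_polygonal A" by blast
  have dG: "conic_det \<Gamma> \<noteq> 0" and dC: "conic_det C \<noteq> 0"
    using assms(1,2) by (auto simp: regular_conic_def)
  have GP: "conic_eval \<Gamma> P = 0" and CP: "conic_eval C P = 0"
    using assms(4,5) by (auto simp: conic_points_def)
  obtain n1 n2 where n: "conic_grad \<Gamma> P = (n1, n2)" by (cases "conic_grad \<Gamma> P")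
  have "(n1, n2) \<noteq> 0" using det_grad[OF dG GP] n by simp
  then have n12: "n1 \<noteq> 0 \<or> n2 \<noteq> 0" by (auto simp: zero_prod_def)
  define N2 where "N2 = n1^2 + n2^2"
  have N2: "N2 > 0" using n12 unfolding N2_def by (auto intro: add_pos_nonneg add_nonneg_pos)
  define e1 :: point where "e1 = (- n2, n1)"
  define e2 :: point where "e2 = (n1 / N2, n2 / N2)"
  define cx where "cx Z = (e1 \<bullet> (Z - P)) / N2" for Z
  define cy where "cy Z = (n1, n2) \<bullet> (Z - P)" for Z
  have repv: "w = (e1 \<bullet> w / N2) *\<^sub>R e1 + ((n1, n2) \<bullet> w) *\<^sub>R e2" for w :: point
    using N2 by (cases w) (auto simp: e1_def e2_def N2_def power2_eq_square add_divide_distrib[symmetric] eq_divide_eq divide_eq_eq algebra_simps)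
  have rep: "Z = P + cx Z *\<^sub>R e1 + cy Z *\<^sub>R e2" for Z
    using repv[of "Z - P"] unfolding cx_def cy_def by (simp add: algebra_simps)
  have cxphi: "cx (P + x *\<^sub>R e1 + y *\<^sub>R e2) = x" and cyphi: "cy (P + x *\<^sub>R e1 + y *\<^sub>R e2) = y" for x y
    using N2 by (auto simp: cx_def cy_def e1_def e2_def N2_def power2_eq_square add_divide_distrib[symmetric] eq_divide_eq divide_eq_eq algebra_simps)
  have ge1: "conic_grad \<Gamma> P \<bullet> e1 = 0" and ge2: "conic_grad \<Gamma> P \<bullet> e2 = 1"
    using N2 by (auto simp: n e1_def e2_def N2_def power2_eq_square add_divide_distrib[symmetric] eq_divide_eq divide_eq_eq algebra_simps)
  define a where "a = qf \<Gamma> e1"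
  define b where "b = bil \<Gamma> e1 e2"
  define c where "c = qf \<Gamma> e2"
  have GG: "conic_eval \<Gamma> (P + x *\<^sub>R e1 + y *\<^sub>R e2) = y + a*x^2 + b*x*y + c*y^2" for x y
    unfolding eval_phi GP ge1 ge2 a_def b_def c_def by simp
  have detM: "fst e1 * snd e2 - snd e1 * fst e2 = -1"
    using N2 by (auto simp: e1_def e2_def N2_def power2_eq_square add_divide_distrib[symmetric] eq_divide_eq divide_eq_eq algebra_simps)
  have "conic_det (a, b, c, 0, 1, 0) = conic_det \<Gamma>"
    using det_law[of \<Gamma> e1 e2 P] unfolding detM GP ge1 ge2 a_def b_def c_def by simp
  then have a0: "a \<noteq> 0" using dG det_special[of a b c 1] by simp
  define E where "E = conic_grad C P \<bullet> e1"
  define F where "F = conic_grad C P \<bullet> e2"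
  define A0 where "A0 = qf C e1"
  define B0 where "B0 = bil C e1 e2"
  define D0 where "D0 = qf C e2"
  have CC0: "conic_eval C (P + x *\<^sub>R e1 + y *\<^sub>R e2) = E*x + F*y + A0*x^2 + B0*x*y + D0*y^2" for x y
    unfolding eval_phi CP E_def F_def A0_def B0_def D0_def by simp
  obtain \<gamma> :: "real \<Rightarrow> point" and v where g0: "\<gamma> 0 = P" and v0: "v \<noteq> 0"
    and dg: "(\<gamma> has_vector_derivative v) (at 0)"
    and evg: "eventually (\<lambda>t. \<gamma> t \<in> conic_points \<Gamma>) (at 0)"
    and Og: "(\<lambda>t. conic_eval C (\<gamma> t)) \<in> O[at 0](\<lambda>t. t ^ 3)"
    using assms(6) unfolding intersection_order_ge3_def by blast
  have dlin: "((\<lambda>t. q \<bullet> (\<gamma> t - P)) has_real_derivative q \<bullet> v) (at 0)" for q :: point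
  proof -
    have "((\<lambda>t. \<gamma> t - P) has_derivative (\<lambda>x. x *\<^sub>R v)) (at 0)"
      using dg unfolding has_vector_derivative_def by (auto intro!: derivative_eq_intros)
    then have "((\<lambda>t. q \<bullet> (\<gamma> t - P)) has_derivative (\<lambda>x. q \<bullet> (x *\<^sub>R v))) (at 0)"
      by (rule has_derivative_inner_right)
    moreover have "(\<lambda>x. q \<bullet> (x *\<^sub>R v)) = (*) (q \<bullet> v)" by (auto simp: fun_eq_iff)
    ultimately show ?thesis by (simp add: has_field_derivative_def)
  qed
  have dX: "((\<lambda>t. cx (\<gamma> t)) has_real_derivative (e1 \<bullet> v) / N2) (at 0)"
    unfolding cx_def by (rule DERIV_cdivide[OF dlin])
  have dY: "((\<lambda>t. cy (\<gamma> t)) has_real_derivative (n1, n2) \<bullet> v) (at 0)"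
    unfolding cy_def by (rule dlin)
  have Vnz: "(e1 \<bullet> v) / N2 \<noteq> 0 \<or> (n1, n2) \<bullet> v \<noteq> 0"
  proof (rule ccontr)
    assume "\<not> ?thesis"
    then have "v = 0" using repv[of v] N2 by auto
    with v0 show False by simp
  qed
  have evG: "eventually (\<lambda>t. cy (\<gamma> t) + a*(cx (\<gamma> t))^2 + b*cx (\<gamma> t)*cy (\<gamma> t) + c*(cy (\<gamma> t))^2 = 0) (at 0)"
    using evg
  proof eventually_elim
    case (elim t)
    then have "conic_eval \<Gamma> (P + cx (\<gamma> t) *\<^sub>R e1 + cy (\<gamma> t) *\<^sub>R e2) = 0"
      using rep[of "\<gamma> t"] by (simp add: conic_points_def)
    then show ?case unfolding GG .
  qed
  have fun_eq: "(\<lambda>t. conic_eval C (\<gamma> t)) = (\<lambda>t. E*cx (\<gamma> t) + F*cy (\<gamma> t) + A0*(cx (\<gamma> t))^2 + B0*cx (\<gamma> t)*cy (\<gamma> t) + D0*(cy (\<gamma> t))^2)"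
  proof
    fix t
    have "conic_eval C (\<gamma> t) = conic_eval C (P + cx (\<gamma> t) *\<^sub>R e1 + cy (\<gamma> t) *\<^sub>R e2)"
      using rep[of "\<gamma> t"] by simp
    then show "conic_eval C (\<gamma> t) = E*cx (\<gamma> t) + F*cy (\<gamma> t) + A0*(cx (\<gamma> t))^2 + B0*cx (\<gamma> t)*cy (\<gamma> t) + D0*(cy (\<gamma> t))^2"
      unfolding CC0 .
  qed
  have X0: "cx (\<gamma> 0) = 0" and Y0: "cy (\<gamma> 0) = 0" by (simp_all add: g0 cx_def cy_def)
  have EA: "E = 0 \<and> A0 = a * F"
    using asym[OF X0 Y0 dX dY Vnz evG] Og unfolding fun_eq by blast
  then have E0: "E = 0" and A0: "A0 = a * F" by auto
  have "conic_det (A0, B0, D0, 0, F, 0) = conic_det C"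
    using det_law[of C e1 e2 P] unfolding detM CP E_def[symmetric] F_def[symmetric]
      A0_def[symmetric] B0_def[symmetric] D0_def[symmetric] E0 by simp
  then have F0: "F \<noteq> 0" using dC det_special[of A0 B0 D0 F] by auto
  define b' where "b' = B0 / F"
  define c' where "c' = D0 / F"
  have B0': "B0 = F * b'" and D0': "D0 = F * c'" using F0 by (simp_all add: b'_def c'_def)
  have CC: "conic_eval C (P + x *\<^sub>R e1 + y *\<^sub>R e2) = F * (y + a*x^2 + b'*x*y + c'*y^2)" for x y
    unfolding CC0 E0 A0 B0' D0' by (simp add: algebra_simps)
  have TT: "conic_grad C (P + p *\<^sub>R e1 + q *\<^sub>R e2) \<bullet> ((P + x *\<^sub>R e1 + y *\<^sub>R e2) - (P + p *\<^sub>R e1 + q *\<^sub>R e2))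
      = F * ((2 * a * p + b' * q)*(x - p) + (1 + b' * p + 2 * c' * q)*(y - q))" for p q x y
    unfolding grad_phi E_def[symmetric] F_def[symmetric] A0_def[symmetric] B0_def[symmetric]
      D0_def[symmetric] E0 A0 B0' D0' by (simp add: algebra_simps)
  have Ain: "\<And>i. conic_eval \<Gamma> (A i) = 0"
    using insc by (auto simp: inscribed_circumscribed_def conic_points_def)
  have Ane: "\<And>i. A i \<noteq> A (Suc i)" using insc by (auto simp: inscribed_circumscribed_def)
  have Lne: "\<And>i. line_through (A i) (A (Suc i)) \<noteq> line_through (A (Suc i)) (A (Suc (Suc i)))"
    using insc by (auto simp: inscribed_circumscribed_def)
  have "\<forall>i. \<exists>p. fst p \<in> conic_points C \<and> snd p \<noteq> 0 \<and> conic_grad C (fst p) \<bullet> snd p = 0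
        \<and> line_through (A i) (A (Suc i)) = {fst p + t *\<^sub>R snd p | t. True}"
  proof
    fix i
    have "tangent_to (line_through (A i) (A (Suc i))) C"
      using insc unfolding inscribed_circumscribed_def by blast
    then obtain Xp wp where "Xp \<in> conic_points C" "wp \<noteq> 0" "conic_grad C Xp \<bullet> wp = 0"
        "line_through (A i) (A (Suc i)) = {Xp + t *\<^sub>R wp | t. True}"
      unfolding tangent_to_def by blast
    then show "\<exists>p. fst p \<in> conic_points C \<and> snd p \<noteq> 0 \<and> conic_grad C (fst p) \<bullet> snd p = 0
        \<and> line_through (A i) (A (Suc i)) = {fst p + t *\<^sub>R snd p | t. True}"
      by (intro exI[of _ "(Xp, wp)"]) simp
  qed
  then obtain pw where pw: "\<And>i. fst (pw i) \<in> conic_points C \<and> snd (pw i) \<noteq> 0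
      \<and> conic_grad C (fst (pw i)) \<bullet> snd (pw i) = 0
      \<and> line_through (A i) (A (Suc i)) = {fst (pw i) + t *\<^sub>R snd (pw i) | t. True}"
    by metis
  define X where "X i = fst (pw i)" for i
  define W where "W i = snd (pw i)" for i
  have XC: "conic_eval C (X i) = 0" for i using pw[of i] by (simp add: X_def conic_points_def)
  have W0: "W i \<noteq> 0" for i using pw[of i] by (simp add: W_def)
  have gW: "conic_grad C (X i) \<bullet> W i = 0" for i using pw[of i] by (simp add: X_def W_def)
  have Lin: "line_through (A i) (A (Suc i)) = {X i + t *\<^sub>R W i | t. True}" for i
    using pw[of i] by (simp add: X_def W_def)
  have tang: "conic_grad C (X i) \<bullet> (A i - X i) = 0 \<and> conic_grad C (X i) \<bullet> (A (Suc i) - X i) = 0" for i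
  proof -
    have "A i \<in> line_through (A i) (A (Suc i))" unfolding line_through_def by (auto intro: exI[of _ 0])
    moreover have "A (Suc i) \<in> line_through (A i) (A (Suc i))" unfolding line_through_def
      by (auto intro!: exI[of _ 1])
    ultimately obtain t1 t2 where "A i = X i + t1 *\<^sub>R W i" "A (Suc i) = X i + t2 *\<^sub>R W i"
      unfolding Lin by blast
    then show ?thesis using gW[of i] by simp
  qed
  define x where "x i = cx (A i)" for i
  define y where "y i = cy (A i)" for i
  define \<xi> where "\<xi> i = cx (X i)" for i
  define \<eta> where "\<eta> i = cy (X i)" for i
  have Arep: "A i = P + x i *\<^sub>R e1 + y i *\<^sub>R e2" for i using rep unfolding x_def y_def by simp
  have Xrep: "X i = P + \<xi> i *\<^sub>R e1 + \<eta> i *\<^sub>R e2" for i using rep unfolding \<xi>_def \<eta>_def by simp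
  have GA: "y i + a*(x i)^2 + b*x i*y i + c*(y i)^2 = 0" for i
    using Ain[of i] unfolding Arep GG .
  have CX: "\<eta> i + a*(\<xi> i)^2 + b'*\<xi> i*\<eta> i + c'*(\<eta> i)^2 = 0" for i
    using XC[of i] F0 unfolding Xrep CC by simp
  have T1: "(2*a*\<xi> i + b'*\<eta> i)*(x i - \<xi> i) + (1 + b'*\<xi> i + 2*c'*\<eta> i)*(y i - \<eta> i) = 0" for i
    using tang[of i] F0 unfolding Xrep Arep TT by simp
  have T2: "(2*a*\<xi> i + b'*\<eta> i)*(x (Suc i) - \<xi> i) + (1 + b'*\<xi> i + 2*c'*\<eta> i)*(y (Suc i) - \<eta> i) = 0" for i
    using tang[of i] F0 unfolding Xrep Arep[of "Suc i"] TT by simp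
  have xyne: "x i \<noteq> x (Suc i) \<or> y i \<noteq> y (Suc i)" for i
    using Ane[of i] Arep[of i] Arep[of "Suc i"] by auto
  have yx0: "x j = 0" if "y j = 0" for j
    using GA[of j] that a0 by simp
  have eta0: "\<eta> i \<noteq> 0" for i
  proof
    assume h: "\<eta> i = 0"
    then have "\<xi> i = 0" using CX[of i] a0 by simp
    then have "y i = 0" "y (Suc i) = 0" using T1[of i] T2[of i] h by simp_all
    then show False using xyne[of i] yx0 by metis
  qed
  have ynz: "y i \<noteq> 0" for i
  proof
    assume h: "y i = 0"
    then have "x i = 0" by (rule yx0)
    have q: "a*(\<xi> i)^2 + b'*\<xi> i*\<eta> i + c'*(\<eta> i)^2 = - \<eta> i" using CX[of i] by simp
    have "(2*a*\<xi> i + b'*\<eta> i)*(x i - \<xi> i) + (1 + b'*\<xi> i + 2*c'*\<eta> i)*(y i - \<eta> i)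
        = - 2 * (a*(\<xi> i)^2 + b'*\<xi> i*\<eta> i + c'*(\<eta> i)^2) - \<eta> i"
      using h \<open>x i = 0\<close> by (simp add: algebra_simps power2_eq_square)
    also have "\<dots> = \<eta> i" unfolding q by simp
    finally show False using T1[of i] eta0[of i] by simp
  qed
  define k where "k i = x i / y i" for i
  define u where "u i = \<xi> i / \<eta> i" for i
  have h1: "a * (k i - u i)^2 = (b' - b) * k i + (c' - c)" for i
  proof -
    have "\<eta> i * y i * ((b'-b)*(x i/y i) + (c'-c) - a*(x i/y i - \<xi> i/\<eta> i)^2) = 0"
      using core[OF ynz[of i] eta0[of i] GA[of i] CX[of i]] T1[of i] by simp
    then show ?thesis using ynz[of i] eta0[of i] by (simp add: k_def u_def)
  qed
  have h2: "a * (k (Suc i) - u i)^2 = (b' - b) * k (Suc i) + (c' - c)" for i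
  proof -
    have "\<eta> i * y (Suc i) * ((b'-b)*(x (Suc i)/y (Suc i)) + (c'-c) - a*(x (Suc i)/y (Suc i) - \<xi> i/\<eta> i)^2) = 0"
      using core[OF ynz[of "Suc i"] eta0[of i] GA[of "Suc i"] CX[of i]] T2[of i] by simp
    then show ?thesis using ynz[of "Suc i"] eta0[of i] by (simp add: k_def u_def)
  qed
  have kne: "k i \<noteq> k (Suc i)" for i
    using param_inj[OF ynz[of i] ynz[of "Suc i"] GA[of i] GA[of "Suc i"]] xyne[of i]
    unfolding k_def by blast
  have une: "u i \<noteq> u (Suc i)" for i
  proof
    assume "u i = u (Suc i)"
    then have "\<xi> i = \<xi> (Suc i) \<and> \<eta> i = \<eta> (Suc i)"
      using param_inj[OF eta0[of i] eta0[of "Suc i"] CX[of i] CX[of "Suc i"]] unfolding u_def by blast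
    then have XX: "X i = X (Suc i)" using Xrep[of i] Xrep[of "Suc i"] by simp
    have "conic_grad C (X i) \<noteq> 0" using det_grad[OF dC XC[of i]] .
    then have "{X i + t *\<^sub>R W i | t. True} = {X i + t *\<^sub>R W (Suc i) | t. True}"
      using line_eq[of "conic_grad C (X i)" "W i" "W (Suc i)" "X i"] gW[of i] gW[of "Suc i"] W0 XX by simp
    then show False using Lne[of i] Lin[of i] Lin[of "Suc i"] XX by simp
  qed
  obtain m where m: "m > 0" "\<And>i. A (i + m) = A i" using clo unfolding closed_polygonal_def by blast
  have per: "k (i + m) = k i" for i using m(2)[of i] unfolding k_def x_def y_def by simp
  show False using recur[OF a0 h1 h2 kne une m(1) per] .
qed


end
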